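(* For all $\lambda,\alpha,\beta>0$, $X\sim\mathrm{MLFD}(\lambda,\alpha,\beta)$ has increasing failure rate: the function $r(t)=P(X=t)/P(X\ge t)$ is nondecreasing in $t\in\{0,1,2,\dots\}$.
   Context: For $\alpha>0,\beta>0$ and $z\in\mathbb{C}$, the generalized Mittag-Leffler function is $E_{\alpha,\beta}(z)=\sum_{k=0}^\infty z^k/\Gamma(\alpha k+\beta)$. For $\lambda,\alpha,\beta>0$, the Mittag-Leffler function distribution $\mathrm{MLFD}(\lambda,\alpha,\beta)$ is the distribution on $\{0,1,2,\dots\}$ with $P(X=k)=\lambda^k/\{\Gamma(\alpha k+\beta)E_{\alpha,\beta}(\lambda)\}$. *)

theory Defs
  imports "HOL-Analysis.Analysis"
begin

definition mittag_leffler :: "real \<Rightarrow> real \<Rightarrow> 'a::Gamma \<Rightarrow> 'a" where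
  "mittag_leffler \<alpha> \<beta> z = (\<Sum>k. z ^ k / Gamma (of_real (\<alpha> * real k + \<beta>)))"

definition mlfd_pmf :: "real \<Rightarrow> real \<Rightarrow> real \<Rightarrow> nat \<Rightarrow> real" where
  "mlfd_pmf lam \<alpha> \<beta> k = lam ^ k / (Gamma (\<alpha> * real k + \<beta>) * mittag_leffler \<alpha> \<beta> lam)"

definition mlfd_survival :: "real \<Rightarrow> real \<Rightarrow> real \<Rightarrow> nat \<Rightarrow> real" where
  "mlfd_survival lam \<alpha> \<beta> t = (\<Sum>k. mlfd_pmf lam \<alpha> \<beta> (k + t))"

definition mlfd_failure_rate :: "real \<Rightarrow> real \<Rightarrow> real \<Rightarrow> nat \<Rightarrow> real" where
  "mlfd_failure_rate lam \<alpha> \<beta> t = mlfd_pmf lam \<alpha> \<beta> t / mlfd_survival lam \<alpha> \<beta> t"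

end

theory Submission
  imports Defs
begin

lemma slope_step:
  fixes f :: "real \<Rightarrow> real"
  assumes f: "convex_on {0<..} f" and "0 < a" "a < b" "b < c"
  shows "(f b - f a) / (b - a) \<le> (f c - f b) / (c - b)"
proof -
  have ain: "a \<in> {0<..}" and cin: "c \<in> {0<..}" using assms by auto
  have 1: "(f a - f b) / (a - b) \<le> (f a - f c) / (a - c)"
    by (rule convex_on_slope_le(1)[OF f ain cin \<open>a < b\<close> \<open>b < c\<close>])
  have 2: "(f a - f c) / (a - c) \<le> (f b - f c) / (b - c)"
    by (rule convex_on_slope_le(2)[OF f ain cin \<open>a < b\<close> \<open>b < c\<close>])
  have "(f b - f a) / (b - a) = (f a - f b) / (a - b)"
    using minus_divide_divide[of "f a - f b" "a - b"] by (simp only: minus_diff_eq)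
  moreover have "(f c - f b) / (c - b) = (f b - f c) / (b - c)"
    using minus_divide_divide[of "f b - f c" "b - c"] by (simp only: minus_diff_eq)
  ultimately show ?thesis using 1 2 by linarith
qed

lemma slope_mono:
  fixes f :: "real \<Rightarrow> real"
  assumes f: "convex_on {0<..} f" and "0 < p" "p < q" "q \<le> r" "r < s"
  shows "(f q - f p) / (q - p) \<le> (f s - f r) / (s - r)"
proof (cases "q = r")
  case True
  then show ?thesis using slope_step[OF f, of p q s] assms by simp
next
  case False
  have "(f q - f p) / (q - p) \<le> (f r - f q) / (r - q)"
    using slope_step[OF f, of p q r] assms False by simp
  also have "\<dots> \<le> (f s - f r) / (s - r)"
    using slope_step[OF f, of q r s] assms False by simp
  finally show ?thesis .
qed

lemma gamma_ineq:
  fixes x y \<alpha> :: real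
  assumes "x > 0" "\<alpha> > 0" "y = x \<or> y \<ge> x + \<alpha>"
  shows "Gamma y * Gamma (x + \<alpha>) \<le> Gamma (y + \<alpha>) * Gamma x"
proof (cases "y = x")
  case True then show ?thesis by (simp add: mult.commute)
next
  case False
  hence y: "y \<ge> x + \<alpha>" using assms by auto
  let ?L = "ln \<circ> Gamma :: real \<Rightarrow> real"
  have "(?L (x + \<alpha>) - ?L x) / (x + \<alpha> - x) \<le> (?L (y + \<alpha>) - ?L y) / (y + \<alpha> - y)"
    using slope_mono[OF log_convex_Gamma_real, of x "x + \<alpha>" y "y + \<alpha>"] assms y by simp
  hence "ln (Gamma (x + \<alpha>)) - ln (Gamma x) \<le> ln (Gamma (y + \<alpha>)) - ln (Gamma y)"
    using assms by (simp add: divide_le_cancel)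
  moreover have "Gamma x > 0" "Gamma y > 0" "Gamma (x+\<alpha>) > 0" "Gamma (y+\<alpha>) > 0"
    using assms y by auto
  ultimately have "ln (Gamma y * Gamma (x + \<alpha>)) \<le> ln (Gamma (y + \<alpha>) * Gamma x)"
    by (simp add: ln_mult)
  thus ?thesis using assms y by (simp add: mult_pos_pos)
qed

lemma gamma_growth:
  fixes x \<alpha> :: real
  assumes "x > 1" "\<alpha> > 0"
  shows "(x - 1) powr \<alpha> * Gamma x \<le> Gamma (x + \<alpha>)"
proof -
  let ?L = "ln \<circ> Gamma :: real \<Rightarrow> real"
  have "(?L x - ?L (x - 1)) / (x - (x - 1)) \<le> (?L (x + \<alpha>) - ?L x) / (x + \<alpha> - x)"
    using slope_mono[OF log_convex_Gamma_real, of "x - 1" x x "x + \<alpha>"] assms by simp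
  moreover have "Gamma x = (x - 1) * Gamma (x - 1)"
    using Gamma_plus1[of "x - 1"] assms
    by (simp add: nonpos_Ints_def)
  moreover have "Gamma (x - 1) \<noteq> 0"
  proof -
    have "x - 1 > 0" using assms by simp
    hence "Gamma (x - 1) > 0" by (rule Gamma_real_pos)
    thus ?thesis by simp
  qed
  ultimately have "ln (x - 1) \<le> (ln (Gamma (x + \<alpha>)) - ln (Gamma x)) / \<alpha>"
    using assms by (simp add: ln_mult)
  hence "\<alpha> * ln (x - 1) \<le> ln (Gamma (x + \<alpha>)) - ln (Gamma x)"
    using assms by (simp add: field_simps)
  hence "exp (\<alpha> * ln (x - 1)) \<le> exp (ln (Gamma (x + \<alpha>)) - ln (Gamma x))"
    by simp
  hence "(x - 1) powr \<alpha> \<le> Gamma (x + \<alpha>) / Gamma x"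
    using assms by (simp add: powr_def exp_diff)
  thus ?thesis using assms by (simp add: field_simps)
qed

theorem mainTheorem8:
  fixes lam \<alpha> \<beta> :: real
  assumes "lam > 0" and "\<alpha> > 0" and "\<beta> > 0"
  shows "mono (mlfd_failure_rate lam \<alpha> \<beta>)"
proof -
  define a where "a = (\<lambda>k::nat. lam ^ k / Gamma (\<alpha> * real k + \<beta>))"
  have apos: "a k > 0" for k
    unfolding a_def using assms by (intro divide_pos_pos Gamma_real_pos) (auto intro: add_nonneg_pos)
  have asuc: "a (Suc n) = lam * a n * (Gamma (\<alpha> * real n + \<beta>) / Gamma (\<alpha> * real n + \<beta> + \<alpha>))" for n
  proof -
    have "\<alpha> * real n + \<beta> > 0" using assms by (auto intro: add_nonneg_pos)
    hence "Gamma (\<alpha> * real n + \<beta>) > 0" by (rule Gamma_real_pos)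
    thus ?thesis unfolding a_def by (simp add: algebra_simps)
  qed
  define M where "M = (2 * lam) powr (1 / \<alpha>) + 2"
  obtain N :: nat where N: "real N > (M + 1) / \<alpha>" using reals_Archimedean2 by blast
  have summ: "summable a"
  proof (rule summable_ratio_test[of "1/2" N])
    fix n assume n: "n \<ge> N"
    define x where "x = \<alpha> * real n + \<beta>"
    have "real n \<ge> real N" using n by simp
    hence "\<alpha> * real n \<ge> \<alpha> * real N" using assms by (simp add: mult_left_mono)
    moreover have "\<alpha> * real N > M + 1" using N assms by (simp add: field_simps)
    ultimately have xM: "x - 1 \<ge> M" unfolding x_def using assms by linarith
    have M2: "M \<ge> 2" unfolding M_def by simp
    hence x1: "x > 1" using xM by linarith
    have gx: "Gamma x > 0" using x1 by simp
    have "(x - 1) powr \<alpha> \<ge> M powr \<alpha>"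
      using xM M2 assms by (intro powr_mono2) auto
    moreover have "M powr \<alpha> \<ge> ((2 * lam) powr (1 / \<alpha>)) powr \<alpha>"
      unfolding M_def using assms by (intro powr_mono2) auto
    moreover have "((2 * lam) powr (1 / \<alpha>)) powr \<alpha> = 2 * lam"
      using assms by (simp add: powr_powr)
    ultimately have big: "(x - 1) powr \<alpha> \<ge> 2 * lam" by linarith
    have gg: "(x - 1) powr \<alpha> * Gamma x \<le> Gamma (x + \<alpha>)"
      using gamma_growth[OF x1 assms(2)] .
    have "Gamma x / Gamma (x + \<alpha>) \<le> 1 / (2 * lam)"
    proof -
      have "2 * lam * Gamma x \<le> Gamma (x + \<alpha>)"
        using big gx gg by (meson mult_right_mono less_imp_le order_trans)
      moreover have "Gamma (x + \<alpha>) > 0" using x1 assms by simp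
      ultimately show ?thesis using assms gx by (simp add: field_simps)
    qed
    hence "lam * a n * (Gamma x / Gamma (x + \<alpha>)) \<le> lam * a n * (1 / (2 * lam))"
      using apos[of n] assms by (intro mult_left_mono) auto
    thus "norm (a (Suc n)) \<le> 1 / 2 * norm (a n)"
      using apos[of n] apos[of "Suc n"] assms asuc[of n] unfolding x_def by simp
  qed simp
  define E where "E = suminf a"
  have Epos: "E > 0" unfolding E_def using summ apos by (rule suminf_pos)
  have Edef: "mittag_leffler \<alpha> \<beta> lam = E"
    unfolding mittag_leffler_def E_def a_def by simp
  have pmf: "mlfd_pmf lam \<alpha> \<beta> k = a k / E" for k
    unfolding mlfd_pmf_def Edef a_def by simp
  define S where "S = (\<lambda>t. suminf (\<lambda>k. a (k + t)))"
  have summS: "summable (\<lambda>k. a (k + t))" for t using summ by simp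
  have Spos: "S t > 0" for t unfolding S_def using summS apos by (rule suminf_pos)
  have surv: "mlfd_survival lam \<alpha> \<beta> t = S t / E" for t
    unfolding mlfd_survival_def pmf S_def using suminf_divide[OF summS] by simp
  have rate: "mlfd_failure_rate lam \<alpha> \<beta> t = a t / S t" for t
    unfolding mlfd_failure_rate_def pmf surv using Epos by simp
  have termle: "a (k + Suc t) / a (Suc t) \<le> a (k + t) / a t" for k t
  proof -
    define x where "x = \<alpha> * real t + \<beta>"
    define y where "y = \<alpha> * real (k + t) + \<beta>"
    have x0: "x > 0" unfolding x_def using assms by (simp add: add_nonneg_pos)
    have "y = x \<or> y \<ge> x + \<alpha>"
    proof (cases k)
      case 0 then show ?thesis unfolding x_def y_def by simp
    next
      case (Suc j)
      have "\<alpha> * real (k + t) = \<alpha> * real t + \<alpha> + \<alpha> * real j" using Suc by (simp add: algebra_simps)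
      moreover have "\<alpha> * real j \<ge> 0" using assms by simp
      ultimately show ?thesis unfolding x_def y_def by linarith
    qed
    from gamma_ineq[OF x0 assms(2) this]
    have G: "Gamma y * Gamma (x + \<alpha>) \<le> Gamma (y + \<alpha>) * Gamma x" .
    have y0: "y > 0" unfolding y_def using assms by (simp add: add_nonneg_pos)
    have e1: "\<alpha> * real (k + Suc t) + \<beta> = y + \<alpha>" unfolding y_def by (simp add: algebra_simps)
    have e2: "\<alpha> * real (Suc t) + \<beta> = x + \<alpha>" unfolding x_def by (simp add: algebra_simps)
    have "a (k + Suc t) / a (Suc t) = lam ^ k * (Gamma (x + \<alpha>) / Gamma (y + \<alpha>))"
      unfolding a_def e1 e2 using x0 y0 assms by (simp add: field_simps power_add)
    moreover have "a (k + t) / a t = lam ^ k * (Gamma x / Gamma y)"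
      unfolding a_def x_def[symmetric] y_def[symmetric] using x0 y0 assms
      by (simp add: field_simps power_add)
    moreover have "Gamma (x + \<alpha>) / Gamma (y + \<alpha>) \<le> Gamma x / Gamma y"
      using G x0 y0 assms by (simp add: divide_simps mult.commute)
    ultimately show ?thesis using assms
      by (metis mult_left_mono zero_le_power less_imp_le times_divide_eq_right)
  qed
  show ?thesis
  proof (rule incseq_SucI)
    fix t
    have "S (Suc t) / a (Suc t) = suminf (\<lambda>k. a (k + Suc t) / a (Suc t))"
      unfolding S_def using suminf_divide[OF summS, of "Suc t" "a (Suc t)"] by simp
    also have "\<dots> \<le> suminf (\<lambda>k. a (k + t) / a t)"
      by (intro suminf_le summable_divide termle summS)
    also have "\<dots> = S t / a t"
      unfolding S_def using suminf_divide[OF summS] by simp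
    finally have le: "S (Suc t) / a (Suc t) \<le> S t / a t" .
    have "a t / S t = 1 / (S t / a t)" by simp
    also have "\<dots> \<le> 1 / (S (Suc t) / a (Suc t))"
      using le Spos apos by (intro divide_left_mono) auto
    also have "\<dots> = a (Suc t) / S (Suc t)" by simp
    finally show "mlfd_failure_rate lam \<alpha> \<beta> t \<le> mlfd_failure_rate lam \<alpha> \<beta> (Suc t)"
      unfolding rate .
  qed
qed

end
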